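(* For every integer $l\ge -1$ and every integer $n\ge1$, the subset $S'_{l,l+n}=\mu(S_l\cap S_{l+n})\subset M$ is an invariant submanifold of the KP equations $\partial_{t_j}h=\partial_xH^{(j)}$, $j\ge1$ (i.e. all KP flows are tangent to it).
   Context: Let $x$ be a space variable; all coefficients below are functions of $x$, and a subscript $x$ denotes $\partial_x$. Let $M$ be the affine space of formal Laurent series $h(z)=z+\sum_{j\ge1}h_j z^{-j}$, $A$ the affine space of formal Laurent series $a(z)=z+\sum_{j\ge0}a_j z^{-j}$, and $N=M\times A$. The Faà di Bruno iterates of $h$ are $h^{(0)}=1$, $h^{(j+1)}=(\partial_x+h)h^{(j)}=\partial_x h^{(j)}+h\,h^{(j)}$ for $j\ge0$. For $j\ge0$, the KP current $H^{(j)}$ is the unique Laurent series of the form $H^{(j)}=h^{(j)}+\sum_{l=0}^{j-2}p^j_l[h]\,h^{(l)}$, with the $p^j_l[h]$ differential polynomials in the $h_i$ (independent of $z$), such that $H^{(j)}=z^j+O(z^{-1})$ as $z\to\infty$. The KP equations are $\partial_{t_j}h=\partial_x H^{(j)}$. The maps $\mu,\sigma:N\to M$ are $\mu(h,a)=h$ and $\sigma(h,a)=h+a_x/a$. The DKP equations on $N$ are $\partial_{t_j}h=\partial_xH^{(j)}$, $\partial_{t_j}a=a(\tilde H^{(j)}-H^{(j)})$, where $\tilde H^{(j)}$ is $H^{(j)}$ evaluated at $\sigma(h,a)$. For an integer $l\ge-1$, $S_l\subset N$ is the set of pairs $(h,a)$ satisfying $z^l a=H^{(l+1)}+\sum_{m=0}^{l}a_mH^{(l-m)}$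 (for $l=-1$ the sum is empty, so $S_{-1}=\{a=z\}$). It is known that every DKP vector field is tangent to every $S_l$. *)

theory Defs
  imports "HOL-Computational_Algebra.Formal_Laurent_Series"
begin

text \<open>
Coefficients ("functions of x") live in an abstract commutative differential ring
(type 'a with a derivation D playing the role of the x-derivative).
A formal Laurent series in z with finitely many positive powers of z is represented
as a formal Laurent series (library type fls) in the variable w = 1/z:
the coefficient of z^k of f is  f $$ (-k).
\<close>

definition zpow :: "int \<Rightarrow> 'a::comm_ring_1 fls" where
  "zpow k = fls_X_intpow (- k)"

definition zcoeff :: "'a::comm_ring_1 fls \<Rightarrow> int \<Rightarrow> 'a" where
  "zcoeff f k = fls_nth f (- k)"

definition derivation :: "('a::comm_ring_1 \<Rightarrow> 'a) \<Rightarrow> bool" where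
  "derivation D \<longleftrightarrow> (\<forall>x y. D (x + y) = D x + D y) \<and> (\<forall>x y. D (x * y) = x * D y + D x * y)"

definition fls_cmap :: "('a::zero \<Rightarrow> 'b::zero) \<Rightarrow> 'a fls \<Rightarrow> 'b fls" where
  "fls_cmap F f = Abs_fls (\<lambda>n. F (fls_nth f n))"

definition dx :: "('a::comm_ring_1 \<Rightarrow> 'a) \<Rightarrow> 'a fls \<Rightarrow> 'a fls" where
  "dx D f = fls_cmap D f"

definition Mset :: "'a::comm_ring_1 fls set" where
  "Mset = {h. zcoeff h 1 = 1 \<and> (\<forall>k. (k > 1 \<or> k = 0) \<longrightarrow> zcoeff h k = 0)}"

definition Aset :: "'a::comm_ring_1 fls set" where
  "Aset = {a. zcoeff a 1 = 1 \<and> (\<forall>k > 1. zcoeff a k = 0)}"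

fun fdb :: "('a::comm_ring_1 \<Rightarrow> 'a) \<Rightarrow> 'a fls \<Rightarrow> nat \<Rightarrow> 'a fls" where
  "fdb D h 0 = 1"
| "fdb D h (Suc j) = dx D (fdb D h j) + h * fdb D h j"

definition KPcurrent :: "('a::comm_ring_1 \<Rightarrow> 'a) \<Rightarrow> 'a fls \<Rightarrow> nat \<Rightarrow> 'a fls" where
  "KPcurrent D h j = (THE H. (\<exists>p :: nat \<Rightarrow> 'a.
       H = fdb D h j + (\<Sum>l<j - 1. fls_const (p l) * fdb D h l)) \<and>
       (\<forall>k \<ge> 0. zcoeff H k = (if k = int j then 1 else 0)))"

definition KPfield :: "('a::comm_ring_1 \<Rightarrow> 'a) \<Rightarrow> nat \<Rightarrow> 'a fls \<Rightarrow> 'a fls" where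
  "KPfield D j h = dx D (KPcurrent D h j)"

text \<open>The maps mu and sigma : N -> M, sigma(h,a) = h + a_x / a
  (a_x / a is the unique q with q * a = a_x; a is invertible since its leading coefficient is 1).\<close>
definition mu :: "'a fls \<times> 'a fls \<Rightarrow> 'a fls" where
  "mu p = fst p"

definition sigma :: "('a::comm_ring_1 \<Rightarrow> 'a) \<Rightarrow> 'a fls \<times> 'a fls \<Rightarrow> 'a fls" where
  "sigma D p = fst p + (THE q. q * snd p = dx D (snd p))"

definition Sset :: "('a::comm_ring_1 \<Rightarrow> 'a) \<Rightarrow> int \<Rightarrow> ('a fls \<times> 'a fls) set" where
  "Sset D l = {(h, a). h \<in> Mset \<and> a \<in> Aset \<and>
      zpow l * a = KPcurrent D h (nat (l + 1))
        + (\<Sum>m \<in> {m::nat. int m \<le> l}. fls_const (zcoeff a (- int m)) * KPcurrent D h (nat (l - int m)))}"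

definition Sprime :: "('a::comm_ring_1 \<Rightarrow> 'a) \<Rightarrow> int \<Rightarrow> int \<Rightarrow> 'a fls set" where
  "Sprime D l l' = mu ` (Sset D l \<inter> Sset D l')"

datatype 'a dual = Dual (re: 'a) (ep: 'a)

instantiation dual :: (comm_ring_1) comm_ring_1
begin
definition "0 = Dual 0 0"
definition "1 = Dual 1 0"
definition "x + y = Dual (re x + re y) (ep x + ep y)"
definition "x - y = Dual (re x - re y) (ep x - ep y)"
definition "- x = Dual (- re x) (- ep x)"
definition "x * y = Dual (re x * re y) (re x * ep y + ep x * re y)"
instance
  by standard (auto simp: zero_dual_def one_dual_def plus_dual_def minus_dual_def
      uminus_dual_def times_dual_def algebra_simps intro: dual.expand)
end

definition dualD :: "('a \<Rightarrow> 'a) \<Rightarrow> 'a dual \<Rightarrow> 'a dual" where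
  "dualD D x = Dual (D (re x)) (D (ep x))"

text \<open>A vector field V on M (over the differential ring ('a, D)) is tangent to the subset
  described functorially by S (S D gives the subset over the differential ring with derivation D)
  if for every point p of S over 'a, the first-order displacement p + eps V(p) lies in S over
  the dual numbers 'a[eps] (eps^2 = 0).\<close>
definition tangent ::
  "('a::comm_ring_1 \<Rightarrow> 'a) \<Rightarrow> ('a fls \<Rightarrow> 'a fls) \<Rightarrow> 'a fls set \<Rightarrow> 'a dual fls set \<Rightarrow> bool" where
  "tangent D V S Seps \<longleftrightarrow>
     (\<forall>p \<in> S. fls_cmap (\<lambda>c. Dual c 0) p + fls_cmap (\<lambda>c. Dual 0 c) (V p) \<in> Seps)"

end

theory Submission
  imports Defs
begin

lemma der_add: "derivation D \<Longrightarrow> D (x + y) = D x + D y"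
  by (simp add: derivation_def)
lemma der_mult: "derivation D \<Longrightarrow> D (x * y) = x * D y + D x * y"
  by (simp add: derivation_def)
lemma der_0: "derivation D \<Longrightarrow> D 0 = 0"
  using der_add[of D 0 0] by simp
lemma der_1: "derivation D \<Longrightarrow> D 1 = 0"
  using der_mult[of D 1 1] by simp
lemma der_uminus: "derivation D \<Longrightarrow> D (- x) = - D x"
  using der_add[of D x "-x"] der_0[of D] by (simp add: add_eq_0_iff2 add.commute)
lemma der_diff: "derivation D \<Longrightarrow> D (x - y) = D x - D y"
  using der_add[of D x "-y"] der_uminus[of D y] by simp
lemma der_sum: "derivation D \<Longrightarrow> D (sum f A) = (\<Sum>x\<in>A. D (f x))"
  by (induction A rule: infinite_finite_induct) (auto simp: der_0 der_add)

lemma cmap_nth: "F 0 = 0 \<Longrightarrow> fls_nth (fls_cmap F f) n = F (fls_nth f n)"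
  unfolding fls_cmap_def
  by (rule nth_Abs_fls) (rule MOST_mono[OF MOST_fls_neg_nth_eq_0[of f]], simp)

lemma dx_nth: "derivation D \<Longrightarrow> fls_nth (dx D f) n = D (fls_nth f n)"
  by (simp add: dx_def cmap_nth der_0)

lemma zcoeff_dx: "derivation D \<Longrightarrow> zcoeff (dx D f) k = D (zcoeff f k)"
  by (simp add: zcoeff_def dx_nth)

lemma fls_times_nth_bound:
  fixes f g :: "'a::comm_ring_1 fls"
  assumes fa: "\<forall>i<a. fls_nth f i = 0" and gb: "\<forall>i<b. fls_nth g i = 0"
  shows "fls_nth (f * g) n = (\<Sum>i=a..n - b. fls_nth f i * fls_nth g (n - i))"
proof (cases "f = 0 \<or> g = 0")
  case True
  then show ?thesis by auto
next
  case False
  then have fz: "f \<noteq> 0" and gz: "g \<noteq> 0" by auto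
  have da: "a \<le> fls_subdegree f"
    using fa fz by (metis fls_nonzeroI fls_subdegree_leI linorder_not_le nth_fls_subdegree_nonzero)
  have db: "b \<le> fls_subdegree g"
    using gb gz by (metis linorder_not_le nth_fls_subdegree_nonzero)
  have "fls_nth (f * g) n = (\<Sum>i=fls_subdegree f..n - fls_subdegree g. fls_nth f i * fls_nth g (n - i))"
    by (rule fls_times_nth(2))
  also have "\<dots> = (\<Sum>i=a..n - b. fls_nth f i * fls_nth g (n - i))"
  proof (rule sum.mono_neutral_left)
    show "{fls_subdegree f..n - fls_subdegree g} \<subseteq> {a..n - b}" using da db by auto
    show "\<forall>i\<in>{a..n - b} - {fls_subdegree f..n - fls_subdegree g}. fls_nth f i * fls_nth g (n - i) = 0"
    proof
      fix i assume "i \<in> {a..n - b} - {fls_subdegree f..n - fls_subdegree g}"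
      then have "i < fls_subdegree f \<or> n - i < fls_subdegree g" by auto
      then show "fls_nth f i * fls_nth g (n - i) = 0"
        by (auto simp: fls_eq0_below_subdegree)
    qed
  qed simp
  finally show ?thesis .
qed

lemma fls_below_sub: "i < fls_subdegree f \<Longrightarrow> fls_nth f i = 0"
  by (simp add: fls_eq0_below_subdegree)

lemma dx_add: "derivation D \<Longrightarrow> dx D (f + g) = dx D f + dx D g"
  by (rule fls_eqI) (simp add: dx_nth der_add)
lemma dx_diff: "derivation D \<Longrightarrow> dx D (f - g) = dx D f - dx D g"
  by (rule fls_eqI) (simp add: dx_nth der_diff)
lemma dx_uminus: "derivation D \<Longrightarrow> dx D (- f) = - dx D f"
  by (rule fls_eqI) (simp add: dx_nth der_uminus)
lemma dx_0: "derivation D \<Longrightarrow> dx D 0 = 0"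
  by (rule fls_eqI) (simp add: dx_nth der_0)
lemma dx_1: "derivation D \<Longrightarrow> dx D 1 = 0"
  by (rule fls_eqI) (simp add: dx_nth der_0 der_1)
lemma dx_const: "derivation D \<Longrightarrow> dx D (fls_const c) = fls_const (D c)"
  by (rule fls_eqI) (simp add: dx_nth der_0)
lemma dx_sum: "derivation D \<Longrightarrow> dx D (sum f A) = (\<Sum>x\<in>A. dx D (f x))"
  by (rule fls_eqI) (simp add: dx_nth der_sum fls_nth_sum)

lemma dx_mult:
  assumes D: "derivation D"
  shows "dx D (f * g) = dx D f * g + f * dx D g"
proof (rule fls_eqI)
  fix n
  define a where "a = fls_subdegree f"
  define b where "b = fls_subdegree g"
  have fa: "\<forall>i<a. fls_nth f i = 0" and gb: "\<forall>i<b. fls_nth g i = 0"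
    by (auto simp: a_def b_def fls_below_sub)
  have dfa: "\<forall>i<a. fls_nth (dx D f) i = 0" and dgb: "\<forall>i<b. fls_nth (dx D g) i = 0"
    using fa gb by (auto simp: dx_nth D der_0)
  have "fls_nth (dx D (f * g)) n = D (\<Sum>i=a..n - b. fls_nth f i * fls_nth g (n - i))"
    by (simp add: dx_nth D fls_times_nth_bound[OF fa gb])
  also have "\<dots> = (\<Sum>i=a..n - b. fls_nth (dx D f) i * fls_nth g (n - i))
     + (\<Sum>i=a..n - b. fls_nth f i * fls_nth (dx D g) (n - i))"
    by (simp add: der_sum D der_mult dx_nth sum.distrib algebra_simps)
  also have "\<dots> = fls_nth (dx D f * g + f * dx D g) n"
    by (simp add: fls_times_nth_bound[OF dfa gb] fls_times_nth_bound[OF fa dgb])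
  finally show "fls_nth (dx D (f * g)) n = fls_nth (dx D f * g + f * dx D g) n" .
qed

locale rhom =
  fixes E :: "'a::comm_ring_1 \<Rightarrow> 'b::comm_ring_1"
  assumes E_add: "E (x + y) = E x + E y" and E_mult: "E (x * y) = E x * E y" and E_1: "E 1 = 1"
begin
lemma E_0: "E 0 = 0" using E_add[of 0 0] by simp
lemma E_uminus: "E (- x) = - E x"
  using E_add[of x "-x"] E_0 by (simp add: add_eq_0_iff2 add.commute)
lemma E_diff: "E (x - y) = E x - E y"
  using E_add[of x "-y"] E_uminus[of y] by simp
lemma E_sum: "E (sum f A) = (\<Sum>x\<in>A. E (f x))"
  by (induction A rule: infinite_finite_induct) (auto simp: E_0 E_add)

lemma cm_nth: "fls_nth (fls_cmap E f) n = E (fls_nth f n)"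
  by (simp add: cmap_nth E_0)
lemma cm_add: "fls_cmap E (f + g) = fls_cmap E f + fls_cmap E g"
  by (rule fls_eqI) (simp add: cm_nth E_add)
lemma cm_diff: "fls_cmap E (f - g) = fls_cmap E f - fls_cmap E g"
  by (rule fls_eqI) (simp add: cm_nth E_diff)
lemma cm_1: "fls_cmap E 1 = 1"
  by (rule fls_eqI) (simp add: cm_nth E_0 E_1)
lemma cm_const: "fls_cmap E (fls_const c) = fls_const (E c)"
  by (rule fls_eqI) (simp add: cm_nth E_0)
lemma cm_sum: "fls_cmap E (sum f A) = (\<Sum>x\<in>A. fls_cmap E (f x))"
  by (rule fls_eqI) (simp add: cm_nth fls_nth_sum E_sum)
lemma cm_mult: "fls_cmap E (f * g) = fls_cmap E f * fls_cmap E g"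
proof (rule fls_eqI)
  fix n
  define a where "a = fls_subdegree f"
  define b where "b = fls_subdegree g"
  have fa: "\<forall>i<a. fls_nth f i = 0" and gb: "\<forall>i<b. fls_nth g i = 0"
    by (auto simp: a_def b_def fls_below_sub)
  have dfa: "\<forall>i<a. fls_nth (fls_cmap E f) i = 0" and dgb: "\<forall>i<b. fls_nth (fls_cmap E g) i = 0"
    using fa gb by (auto simp: cm_nth E_0)
  show "fls_nth (fls_cmap E (f * g)) n = fls_nth (fls_cmap E f * fls_cmap E g) n"
    by (simp add: cm_nth fls_times_nth_bound[OF fa gb] fls_times_nth_bound[OF dfa dgb] E_sum E_mult)
qed
lemma cm_dx:
  assumes "derivation D" "derivation D'" "\<And>c. D' (E c) = E (D c)"
  shows "dx D' (fls_cmap E f) = fls_cmap E (dx D f)"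
  by (rule fls_eqI) (simp add: cm_nth dx_nth assms)
end


definition degle :: "'a::comm_ring_1 fls \<Rightarrow> int \<Rightarrow> bool" where
  "degle f d \<longleftrightarrow> (\<forall>k>d. zcoeff f k = 0)"

lemma degle_nth: "degle f d \<Longrightarrow> \<forall>i < - d. fls_nth f i = 0"
  unfolding degle_def zcoeff_def by (metis minus_less_iff minus_minus)

lemma zcoeff_mult_gen:
  assumes "degle f a" "degle g b"
  shows "zcoeff (f * g) k = (\<Sum>i = - a..b - k. fls_nth f i * fls_nth g (- k - i))"
  unfolding zcoeff_def using fls_times_nth_bound[OF degle_nth[OF assms(1)] degle_nth[OF assms(2)]]
  by (simp add: algebra_simps)

lemma degle_mult:
  assumes "degle f a" "degle g b"
  shows "degle (f * g) (a + b)"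
  unfolding degle_def using zcoeff_mult_gen[OF assms] by simp

lemma zcoeff_mult_top:
  assumes "degle f a" "degle g b"
  shows "zcoeff (f * g) (a + b) = zcoeff f a * zcoeff g b"
  using zcoeff_mult_gen[OF assms, of "a+b"] by (simp add: zcoeff_def)

lemma zcoeff_mult_second:
  assumes "degle f a" "degle g b"
  shows "zcoeff (f * g) (a + b - 1) = zcoeff f a * zcoeff g (b - 1) + zcoeff f (a - 1) * zcoeff g b"
proof -
  have "{- a..b - (a + b - 1)} = {-a, -a+1}" by auto
  then show ?thesis using zcoeff_mult_gen[OF assms, of "a+b-1"]
    by (simp add: zcoeff_def algebra_simps)
qed

lemma zcoeff_add: "zcoeff (f + g) k = zcoeff f k + zcoeff g k"
  by (simp add: zcoeff_def)
lemma zcoeff_diff: "zcoeff (f - g) k = zcoeff f k - zcoeff g k"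
  by (simp add: zcoeff_def)
lemma zcoeff_const_mult: "zcoeff (fls_const c * f) k = c * zcoeff f k"
  by (simp add: zcoeff_def)
lemma zcoeff_sum: "zcoeff (sum f A) k = (\<Sum>x\<in>A. zcoeff (f x) k)"
  by (simp add: zcoeff_def fls_nth_sum)
lemma zcoeff_1: "zcoeff 1 k = (if k = 0 then 1 else 0)"
  by (simp add: zcoeff_def)

lemma degle_add: "degle f d \<Longrightarrow> degle g d \<Longrightarrow> degle (f + g) d"
  by (simp add: degle_def zcoeff_add)
lemma degle_diff: "degle f d \<Longrightarrow> degle g d \<Longrightarrow> degle (f - g) d"
  by (simp add: degle_def zcoeff_diff)
lemma degle_mono: "degle f d \<Longrightarrow> d \<le> e \<Longrightarrow> degle f e"
  by (simp add: degle_def)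
lemma degle_const_mult: "degle f d \<Longrightarrow> degle (fls_const c * f) d"
  by (simp add: degle_def zcoeff_const_mult)
lemma degle_sum: "(\<And>x. x \<in> A \<Longrightarrow> degle (f x) d) \<Longrightarrow> degle (sum f A) d"
  by (simp add: degle_def zcoeff_sum)
lemma degle_dx: "derivation D \<Longrightarrow> degle f d \<Longrightarrow> degle (dx D f) d"
  by (simp add: degle_def zcoeff_dx der_0)

definition Top :: "('a::comm_ring_1 \<Rightarrow> 'a) \<Rightarrow> 'a fls \<Rightarrow> 'a fls \<Rightarrow> 'a fls" where
  "Top D h f = dx D f + h * f"

lemma fdb_Top: "fdb D h k = (Top D h ^^ k) 1"
  by (induction k) (simp_all add: Top_def)

lemma Mset_D:
  assumes "h \<in> Mset"
  shows "degle h 1" "zcoeff h 1 = 1" "zcoeff h 0 = 0"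
  using assms unfolding Mset_def degle_def by auto

lemma Top_lead:
  assumes D: "derivation D" and h: "h \<in> Mset" and f: "degle f d" "zcoeff f d = 1"
  shows "degle (Top D h f) (d + 1)" "zcoeff (Top D h f) (d + 1) = 1"
proof -
  have m: "degle (h * f) (1 + d)" using degle_mult[OF Mset_D(1)[OF h] f(1)] .
  show "degle (Top D h f) (d + 1)" unfolding Top_def
    using degle_add[OF degle_mono[OF degle_dx[OF D f(1)]] m] by (simp add: add.commute)
  have "zcoeff (h * f) (1 + d) = 1" using zcoeff_mult_top[OF Mset_D(1)[OF h] f(1)] f(2) Mset_D(2)[OF h] by simp
  moreover have "zcoeff (dx D f) (d + 1) = 0" using degle_dx[OF D f(1)] by (simp add: degle_def)
  ultimately show "zcoeff (Top D h f) (d + 1) = 1" unfolding Top_def by (simp add: zcoeff_add add.commute)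
qed

lemma Top_pow_lead:
  assumes D: "derivation D" and h: "h \<in> Mset" and f: "degle f d" "zcoeff f d = 1"
  shows "degle ((Top D h ^^ k) f) (d + int k) \<and> zcoeff ((Top D h ^^ k) f) (d + int k) = 1"
proof (induction k)
  case 0
  then show ?case using f by simp
next
  case (Suc k)
  then show ?case using Top_lead[OF D h, of "(Top D h ^^ k) f" "d + int k"] by (simp add: algebra_simps)
qed

lemma fdb_lead:
  assumes D: "derivation D" and h: "h \<in> Mset"
  shows "degle (fdb D h k) (int k)" "zcoeff (fdb D h k) (int k) = 1"
  using Top_pow_lead[OF D h, of 1 0 k] by (simp_all add: fdb_Top degle_def zcoeff_1)

lemma fdb_second:
  assumes D: "derivation D" and h: "h \<in> Mset"
  shows "zcoeff (fdb D h k) (int k - 1) = 0"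
proof (induction k)
  case 0
  then show ?case by (simp add: zcoeff_1)
next
  case (Suc k)
  have "zcoeff (h * fdb D h k) (1 + int k - 1) = 0"
    using zcoeff_mult_second[OF Mset_D(1)[OF h] fdb_lead(1)[OF D h, of k]] Suc Mset_D[OF h]
    by simp
  moreover have "zcoeff (dx D (fdb D h k)) (int k) = 0"
    using fdb_lead[OF D h, of k] by (simp add: zcoeff_dx der_1 D)
  ultimately show ?case by (simp add: zcoeff_add)
qed


section \<open>Triangularity\<close>

lemma degle_lincomb:
  assumes "\<forall>k. degle (b k) (int k + s)"
  shows "degle (\<Sum>k<N. fls_const (c k) * b k) (int N - 1 + s)"
  by (rule degle_sum, rule degle_const_mult, rule degle_mono[of _ "int _ + s"]) (use assms in auto)

lemma tri_zero:
  assumes b1: "\<forall>k. degle (b k) (int k + s)" and b2: "\<forall>k. zcoeff (b k) (int k + s) = 1"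
  shows "(\<forall>m\<ge>s. zcoeff (\<Sum>k<N. fls_const (c k) * b k) m = 0) \<Longrightarrow> (\<Sum>k<N. fls_const (c k) * b k) = 0"
proof (induction N)
  case 0
  then show ?case by simp
next
  case (Suc N)
  have d: "degle (\<Sum>k<N. fls_const (c k) * b k) (int N - 1 + s)" by (rule degle_lincomb[OF b1])
  have "zcoeff (\<Sum>k<Suc N. fls_const (c k) * b k) (int N + s) = c N"
    using d b2 by (simp add: zcoeff_add zcoeff_const_mult degle_def)
  then have cN: "c N = 0" using Suc.prems by auto
  then have eq: "(\<Sum>k<Suc N. fls_const (c k) * b k) = (\<Sum>k<N. fls_const (c k) * b k)" by simp
  show ?case using Suc.IH Suc.prems unfolding eq by simp
qed

lemma tri_solve:
  assumes b1: "\<forall>k. degle (b k) (int k + s)" and b2: "\<forall>k. zcoeff (b k) (int k + s) = 1"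
  shows "\<exists>c. \<forall>m. (s \<le> m \<and> m < int N + s \<longrightarrow> zcoeff (t - (\<Sum>k<N. fls_const (c k) * b k)) m = 0)
      \<and> (int N + s \<le> m \<longrightarrow> zcoeff (t - (\<Sum>k<N. fls_const (c k) * b k)) m = zcoeff t m)"
proof (induction N arbitrary: t)
  case 0
  then show ?case by auto
next
  case (Suc N)
  define c0 where "c0 = zcoeff t (int N + s)"
  define t1 where "t1 = t - fls_const c0 * b N"
  obtain c' where c': "\<forall>m. (s \<le> m \<and> m < int N + s \<longrightarrow> zcoeff (t1 - (\<Sum>k<N. fls_const (c' k) * b k)) m = 0)
      \<and> (int N + s \<le> m \<longrightarrow> zcoeff (t1 - (\<Sum>k<N. fls_const (c' k) * b k)) m = zcoeff t1 m)"
    using Suc.IH by blast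
  define c where "c = c'(N := c0)"
  have eq: "t - (\<Sum>k<Suc N. fls_const (c k) * b k) = t1 - (\<Sum>k<N. fls_const (c' k) * b k)"
    by (simp add: c_def t1_def)
  have t1N: "zcoeff t1 (int N + s) = 0" using b2 by (simp add: t1_def c0_def zcoeff_diff zcoeff_const_mult)
  have t1m: "zcoeff t1 m = zcoeff t m" if "int N + s < m" for m
    using b1 that by (simp add: t1_def zcoeff_diff zcoeff_const_mult degle_def)
  show ?case
  proof (intro exI[of _ c] allI)
    fix m
    show "(s \<le> m \<and> m < int (Suc N) + s \<longrightarrow> zcoeff (t - (\<Sum>k<Suc N. fls_const (c k) * b k)) m = 0)
      \<and> (int (Suc N) + s \<le> m \<longrightarrow> zcoeff (t - (\<Sum>k<Suc N. fls_const (c k) * b k)) m = zcoeff t m)"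
      unfolding eq using c'[rule_format, of m] t1N t1m[of m]
      by (cases "m < int N + s"; cases "m = int N + s") auto
  qed
qed


section \<open>KP currents\<close>

lemma KP_exists:
  assumes D: "derivation D" and h: "h \<in> Mset"
  shows "\<exists>H. (\<exists>p :: nat \<Rightarrow> 'a::comm_ring_1.
       H = fdb D h j + (\<Sum>l<j - 1. fls_const (p l) * fdb D h l)) \<and>
       (\<forall>k \<ge> 0. zcoeff H k = (if k = int j then 1 else 0))"
proof (cases j)
  case 0
  show ?thesis
    apply (rule exI[of _ 1], rule conjI)
     apply (rule exI[of _ "\<lambda>l. 0"])
    using 0 by (auto simp: zcoeff_1)
next
  case (Suc i)
  have b1: "\<forall>k. degle (fdb D h k) (int k + 0)" and b2: "\<forall>k. zcoeff (fdb D h k) (int k + 0) = 1"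
    using fdb_lead[OF D h] by auto
  obtain c where c: "\<forall>m. (0 \<le> m \<and> m < int (j - 1) + 0 \<longrightarrow> zcoeff (fdb D h j - (\<Sum>k<j - 1. fls_const (c k) * fdb D h k)) m = 0)
      \<and> (int (j - 1) + 0 \<le> m \<longrightarrow> zcoeff (fdb D h j - (\<Sum>k<j - 1. fls_const (c k) * fdb D h k)) m = zcoeff (fdb D h j) m)"
    using tri_solve[OF b1 b2, of "j - 1" "fdb D h j"] by (rule exE)
  define H where "H = fdb D h j - (\<Sum>k<j - 1. fls_const (c k) * fdb D h k)"
  have neg: "fls_const (- c l) * fdb D h l = - (fls_const (c l) * fdb D h l)" for l
    by (rule fls_eqI) simp
  have form: "H = fdb D h j + (\<Sum>l<j - 1. fls_const (- c l) * fdb D h l)"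
    unfolding H_def neg sum_negf by simp
  have ij: "int (j - 1) = int j - 1" using Suc by simp
  have cc: "(0 \<le> m \<and> m < int j - 1 \<longrightarrow> zcoeff H m = 0) \<and> (int j - 1 \<le> m \<longrightarrow> zcoeff H m = zcoeff (fdb D h j) m)" for m
    using c[rule_format, of m] unfolding H_def ij add_0_right by blast
  have coef: "zcoeff H k = (if k = int j then 1 else 0)" if "k \<ge> 0" for k
  proof -
    consider "k < int j - 1" | "k = int j - 1" | "k = int j" | "k > int j" by linarith
    then show ?thesis
    proof cases
      case 1 then show ?thesis using cc[of k] that by simp
    next
      case 2 then show ?thesis using cc[of k] fdb_second[OF D h, of j] by simp
    next
      case 3 then show ?thesis using cc[of k] fdb_lead[OF D h, of j] by simp
    next
      case 4 then show ?thesis using cc[of k] fdb_lead(1)[OF D h, of j] by (simp add: degle_def)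
    qed
  qed
  show ?thesis
    apply (rule exI[of _ H], rule conjI)
     apply (rule exI[of _ "\<lambda>l. - c l"], rule form)
    using coef by simp
qed

lemma fls_const_diff': "fls_const (a - b) = fls_const a - fls_const (b::'a::comm_ring_1)"
  by (rule fls_eqI) simp

lemma KP_unique:
  assumes D: "derivation D" and h: "h \<in> Mset"
  and H1: "H1 = fdb D h j + (\<Sum>l<j - 1. fls_const (p1 l) * fdb D h l)"
          "\<forall>k \<ge> 0. zcoeff H1 k = (if k = int j then 1 else 0)"
  and H2: "H2 = fdb D h j + (\<Sum>l<j - 1. fls_const (p2 l) * fdb D h l)"
          "\<forall>k \<ge> 0. zcoeff H2 k = (if k = int j then 1 else 0)"
  shows "H1 = H2"
proof -
  have b1: "\<forall>k. degle (fdb D h k) (int k + 0)" and b2: "\<forall>k. zcoeff (fdb D h k) (int k + 0) = 1"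
    using fdb_lead[OF D h] by auto
  have eq: "H1 - H2 = (\<Sum>l<j - 1. fls_const (p1 l - p2 l) * fdb D h l)"
    by (simp add: H1(1) H2(1) fls_const_diff' left_diff_distrib sum_subtractf)
  have "\<forall>m\<ge>0. zcoeff (H1 - H2) m = 0"
    using H1(2) H2(2) by (simp add: zcoeff_diff)
  then have "\<forall>m\<ge>0. zcoeff (\<Sum>l<j - 1. fls_const (p1 l - p2 l) * fdb D h l) m = 0"
    unfolding eq .
  then have "H1 - H2 = 0" unfolding eq using tri_zero[OF b1 b2, of "\<lambda>l. p1 l - p2 l"] by simp
  then show ?thesis by simp
qed

lemma KP_char:
  assumes D: "derivation D" and h: "h \<in> Mset"
  shows "\<exists>p. KPcurrent D h j = fdb D h j + (\<Sum>l<j - 1. fls_const (p l) * fdb D h l)"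
    "\<forall>k \<ge> 0. zcoeff (KPcurrent D h j) k = (if k = int j then 1 else 0)"
proof -
  have "\<exists>!H. (\<exists>p :: nat \<Rightarrow> 'a.
       H = fdb D h j + (\<Sum>l<j - 1. fls_const (p l) * fdb D h l)) \<and>
       (\<forall>k \<ge> 0. zcoeff H k = (if k = int j then 1 else 0))"
  proof (rule ex_ex1I)
    show "\<exists>H. (\<exists>p :: nat \<Rightarrow> 'a.
       H = fdb D h j + (\<Sum>l<j - 1. fls_const (p l) * fdb D h l)) \<and>
       (\<forall>k \<ge> 0. zcoeff H k = (if k = int j then 1 else 0))" by (rule KP_exists[OF D h])
    fix x y
    assume x: "(\<exists>p :: nat \<Rightarrow> 'a.
       x = fdb D h j + (\<Sum>l<j - 1. fls_const (p l) * fdb D h l)) \<and>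
       (\<forall>k \<ge> 0. zcoeff x k = (if k = int j then 1 else 0))"
    and y: "(\<exists>p :: nat \<Rightarrow> 'a.
       y = fdb D h j + (\<Sum>l<j - 1. fls_const (p l) * fdb D h l)) \<and>
       (\<forall>k \<ge> 0. zcoeff y k = (if k = int j then 1 else 0))"
    from x obtain p1 where p1: "x = fdb D h j + (\<Sum>l<j - 1. fls_const (p1 l) * fdb D h l)" by blast
    from y obtain p2 where p2: "y = fdb D h j + (\<Sum>l<j - 1. fls_const (p2 l) * fdb D h l)" by blast
    show "x = y" by (rule KP_unique[OF D h p1 _ p2]) (use x y in auto)
  qed
  note th = theI'[OF this]
  have KD: "KPcurrent D h j = (THE H. (\<exists>p :: nat \<Rightarrow> 'a.
       H = fdb D h j + (\<Sum>l<j - 1. fls_const (p l) * fdb D h l)) \<and>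
       (\<forall>k \<ge> 0. zcoeff H k = (if k = int j then 1 else 0)))" by (simp add: KPcurrent_def)
  show "\<exists>p. KPcurrent D h j = fdb D h j + (\<Sum>l<j - 1. fls_const (p l) * fdb D h l)"
    "\<forall>k \<ge> 0. zcoeff (KPcurrent D h j) k = (if k = int j then 1 else 0)"
    using th unfolding KD[symmetric] by blast+
qed

section \<open>Spans\<close>

definition Wg :: "('a::comm_ring_1 \<Rightarrow> 'a) \<Rightarrow> 'a fls \<Rightarrow> 'a fls \<Rightarrow> 'a fls set" where
  "Wg D h g = {f. \<exists>c N. f = (\<Sum>k<N. fls_const (c k) * (Top D h ^^ k) g)}"

lemma Wg_I: "f = (\<Sum>k<N. fls_const (c k) * (Top D h ^^ k) g) \<Longrightarrow> f \<in> Wg D h g"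
  unfolding Wg_def by blast

lemma Wg_E:
  assumes "f \<in> Wg D h g"
  obtains c N where "\<forall>k\<ge>N. c k = 0" "f = (\<Sum>k<N. fls_const (c k) * (Top D h ^^ k) g)"
proof -
  obtain c N where f: "f = (\<Sum>k<N. fls_const (c k) * (Top D h ^^ k) g)"
    using assms unfolding Wg_def by blast
  define c' where "c' k = (if k < N then c k else 0)" for k
  have "f = (\<Sum>k<N. fls_const (c' k) * (Top D h ^^ k) g)" unfolding f c'_def by simp
  moreover have "\<forall>k\<ge>N. c' k = 0" by (simp add: c'_def)
  ultimately show ?thesis using that by blast
qed

lemma sum_ext_zero:
  assumes "\<forall>k\<ge>N. c k = 0" "N \<le> (M::nat)"
  shows "(\<Sum>k<M. fls_const (c k) * b k) = (\<Sum>k<N. fls_const (c k) * (b k :: 'a::comm_ring_1 fls))"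
proof (rule sum.mono_neutral_right)
  show "\<forall>i\<in>{..<M} - {..<N}. fls_const (c i) * b i = 0"
  proof
    fix i assume "i \<in> {..<M} - {..<N}"
    then have "\<not> i < N" by simp
    then have "c i = 0" using assms(1) by (simp add: not_less)
    then show "fls_const (c i) * b i = 0" by simp
  qed
qed (use assms in auto)

lemma Wg_0: "0 \<in> Wg D h g"
  by (rule Wg_I[where N=0]) simp

lemma Wg_gen: "g \<in> Wg D h g"
  by (rule Wg_I[where N=1 and c="\<lambda>k. 1"]) (simp add: fls_const_1)

lemma fls_const_add': "fls_const (a + b) = fls_const a + fls_const (b::'a::comm_ring_1)"
  by (rule fls_eqI) simp

lemma Wg_add:
  assumes "f1 \<in> Wg D h g" "f2 \<in> Wg D h g"
  shows "f1 + f2 \<in> Wg D h g"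
proof -
  obtain c1 N1 where c1: "\<forall>k\<ge>N1. c1 k = 0" "f1 = (\<Sum>k<N1. fls_const (c1 k) * (Top D h ^^ k) g)"
    using assms(1) by (rule Wg_E)
  obtain c2 N2 where c2: "\<forall>k\<ge>N2. c2 k = 0" "f2 = (\<Sum>k<N2. fls_const (c2 k) * (Top D h ^^ k) g)"
    using assms(2) by (rule Wg_E)
  have e1: "f1 = (\<Sum>k<max N1 N2. fls_const (c1 k) * (Top D h ^^ k) g)"
    using sum_ext_zero[OF c1(1), of "max N1 N2"] c1(2) by simp
  have e2: "f2 = (\<Sum>k<max N1 N2. fls_const (c2 k) * (Top D h ^^ k) g)"
    using sum_ext_zero[OF c2(1), of "max N1 N2"] c2(2) by simp
  have "f1 + f2 = (\<Sum>k<max N1 N2. fls_const (c1 k + c2 k) * (Top D h ^^ k) g)"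
    unfolding e1 e2 by (simp add: sum.distrib[symmetric] fls_const_add' distrib_right)
  then show ?thesis by (rule Wg_I)
qed

lemma Wg_cmult:
  assumes "f \<in> Wg D h g"
  shows "fls_const a * f \<in> Wg D h g"
proof -
  obtain c N where c: "f = (\<Sum>k<N. fls_const (c k) * (Top D h ^^ k) g)"
    using assms unfolding Wg_def by blast
  have "fls_const a * f = (\<Sum>k<N. fls_const (a * c k) * (Top D h ^^ k) g)"
    unfolding c by (simp add: sum_distrib_left mult.assoc[symmetric])
  then show ?thesis by (rule Wg_I)
qed

lemma Wg_uminus:
  assumes "f \<in> Wg D h g"
  shows "- f \<in> Wg D h g"
proof -
  have "- f = fls_const (-1) * f" by (rule fls_eqI) simp
  moreover have "fls_const (-1) * f \<in> Wg D h g" by (rule Wg_cmult[OF assms])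
  ultimately show ?thesis by simp
qed

lemma Wg_diff:
  assumes "f1 \<in> Wg D h g" "f2 \<in> Wg D h g"
  shows "f1 - f2 \<in> Wg D h g"
  using Wg_add[OF assms(1) Wg_uminus[OF assms(2)]] by simp

lemma Wg_sum:
  assumes "\<And>x. x \<in> A \<Longrightarrow> f x \<in> Wg D h g"
  shows "sum f A \<in> Wg D h g"
  using assms
proof (induction A rule: infinite_finite_induct)
  case (infinite A) then show ?case by (simp add: Wg_0)
next
  case empty then show ?case by (simp add: Wg_0)
next
  case (insert x F) then show ?case by (simp add: Wg_add)
qed

lemma Top_add: "derivation D \<Longrightarrow> Top D h (f + g) = Top D h f + Top D h g"
  by (simp add: Top_def dx_add algebra_simps)

lemma Top_sum: "derivation D \<Longrightarrow> Top D h (sum f A) = (\<Sum>x\<in>A. Top D h (f x))"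
  by (simp add: Top_def dx_sum sum_distrib_left sum.distrib)

lemma Top_cmult: "derivation D \<Longrightarrow> Top D h (fls_const c * f) = fls_const (D c) * f + fls_const c * Top D h f"
  by (simp add: Top_def dx_mult dx_const algebra_simps)

lemma Wg_Top:
  assumes D: "derivation D" and f: "f \<in> Wg D h g"
  shows "Top D h f \<in> Wg D h g"
proof -
  obtain c N where c: "f = (\<Sum>k<N. fls_const (c k) * (Top D h ^^ k) g)"
    using f unfolding Wg_def by blast
  have "Top D h f = (\<Sum>k<N. fls_const (D (c k)) * (Top D h ^^ k) g)
      + (\<Sum>k<N. fls_const (c k) * (Top D h ^^ Suc k) g)"
    unfolding c by (simp add: Top_sum[OF D] Top_cmult[OF D] sum.distrib)
  moreover have "(\<Sum>k<N. fls_const (D (c k)) * (Top D h ^^ k) g) \<in> Wg D h g"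
    by (rule Wg_I) simp
  moreover have "(\<Sum>k<N. fls_const (c k) * (Top D h ^^ Suc k) g) \<in> Wg D h g"
  proof (rule Wg_I[where N="Suc N" and c="\<lambda>k. case k of 0 \<Rightarrow> 0 | Suc i \<Rightarrow> c i"])
    show "(\<Sum>k<N. fls_const (c k) * (Top D h ^^ Suc k) g) =
      (\<Sum>k<Suc N. fls_const (case k of 0 \<Rightarrow> 0 | Suc i \<Rightarrow> c i) * (Top D h ^^ k) g)"
      by (simp only: sum.lessThan_Suc_shift) simp
  qed
  ultimately show ?thesis by (simp add: Wg_add)
qed

lemma Wg_Top_pow:
  assumes D: "derivation D" and f: "f \<in> Wg D h g"
  shows "(Top D h ^^ k) f \<in> Wg D h g"
  by (induction k) (simp_all add: f Wg_Top[OF D])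

lemma Wg_mono:
  assumes D: "derivation D" and g': "g' \<in> Wg D h g" and f: "f \<in> Wg D h g'"
  shows "f \<in> Wg D h g"
proof -
  obtain c N where c: "f = (\<Sum>k<N. fls_const (c k) * (Top D h ^^ k) g')"
    using f unfolding Wg_def by blast
  show ?thesis unfolding c
    by (rule Wg_sum, rule Wg_cmult, rule Wg_Top_pow[OF D g'])
qed

lemma Top_Zmult:
  assumes D: "derivation D" and Z: "dx D Z = 0"
  shows "Top D h (Z * f) = Z * Top D h f"
  by (simp add: Top_def dx_mult[OF D] Z algebra_simps)

lemma Wg_Zmult:
  assumes D: "derivation D" and Z: "dx D Z = 0" and f: "f \<in> Wg D h g"
  shows "Z * f \<in> Wg D h (Z * g)"
proof -
  obtain c N where c: "f = (\<Sum>k<N. fls_const (c k) * (Top D h ^^ k) g)"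
    using f unfolding Wg_def by blast
  have p: "(Top D h ^^ k) (Z * g) = Z * (Top D h ^^ k) g" for k
    by (induction k) (simp_all add: Top_Zmult[OF D Z])
  show ?thesis
    by (rule Wg_I[where N=N and c=c]) (simp add: c p sum_distrib_left algebra_simps)
qed

lemma (in rhom) Top_cm:
  assumes D: "derivation D" "derivation D'" "\<And>c. D' (E c) = E (D c)"
  shows "fls_cmap E (Top D h f) = Top D' (fls_cmap E h) (fls_cmap E f)"
  by (simp add: Top_def cm_add cm_mult cm_dx[OF D])

lemma (in rhom) Wg_cm:
  assumes D: "derivation D" "derivation D'" "\<And>c. D' (E c) = E (D c)" and f: "f \<in> Wg D h g"
  shows "fls_cmap E f \<in> Wg D' (fls_cmap E h) (fls_cmap E g)"
proof -
  obtain c N where c: "f = (\<Sum>k<N. fls_const (c k) * (Top D h ^^ k) g)"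
    using f unfolding Wg_def by blast
  have p: "fls_cmap E ((Top D h ^^ k) g) = (Top D' (fls_cmap E h) ^^ k) (fls_cmap E g)" for k
    by (induction k) (simp_all add: Top_cm[OF D])
  show ?thesis
    by (rule Wg_I[where N=N and c="\<lambda>k. E (c k)"]) (simp add: c cm_sum cm_mult cm_const p)
qed

lemma fdb_W: "fdb D h k \<in> Wg D h 1"
proof (rule Wg_I[where N="Suc k" and c="\<lambda>i. if i = k then 1 else 0"])
  have "fls_const (if i = k then 1 else 0) * (Top D h ^^ i) 1 = (if i = k then (Top D h ^^ i) 1 else 0)" for i
    by simp
  then show "fdb D h k = (\<Sum>i<Suc k. fls_const (if i = k then 1 else 0) * (Top D h ^^ i) 1)"
    by (simp only: fdb_Top) (simp add: sum.delta')
qed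

lemma KP_W:
  assumes D: "derivation D" and h: "h \<in> Mset"
  shows "KPcurrent D h j \<in> Wg D h 1"
proof -
  obtain p where p: "KPcurrent D h j = fdb D h j + (\<Sum>l<j - 1. fls_const (p l) * fdb D h l)"
    using KP_char(1)[OF D h] by blast
  show ?thesis unfolding p
    by (rule Wg_add[OF fdb_W], rule Wg_sum, rule Wg_cmult, rule fdb_W)
qed

section \<open>Characterisation of S_l\<close>

lemma zcoeff_zpow_mult: "zcoeff (zpow l * f) k = zcoeff (f::'a::comm_ring_1 fls) (k - l)"
proof -
  have "fls_shift l 1 * f = fls_shift l f" using fls_X_intpow_times_conv_shift(1)[of "-l" f] by simp
  then show ?thesis by (simp add: zpow_def zcoeff_def)
qed

lemma Aset_D:
  assumes "a \<in> Aset"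
  shows "zcoeff a 1 = 1" "\<And>k. k > 1 \<Longrightarrow> zcoeff a k = 0" "degle a 1"
  using assms unfolding Aset_def degle_def by auto

lemma W_zero:
  assumes D: "derivation D" and h: "h \<in> Mset" and g: "g \<in> Wg D h 1"
    and z: "\<forall>k\<ge>0. zcoeff g k = 0"
  shows "g = 0"
proof -
  obtain c N where c: "g = (\<Sum>k<N. fls_const (c k) * (Top D h ^^ k) 1)"
    using g unfolding Wg_def by blast
  have b1: "\<forall>k. degle (fdb D h k) (int k + 0)" and b2: "\<forall>k. zcoeff (fdb D h k) (int k + 0) = 1"
    using fdb_lead[OF D h] by auto
  have c': "g = (\<Sum>k<N. fls_const (c k) * fdb D h k)" unfolding c fdb_Top ..
  show ?thesis using tri_zero[OF b1 b2, where N=N and c=c] z unfolding c'[symmetric] by simp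
qed

lemma S_crit:
  assumes D: "derivation D" and h: "h \<in> Mset" and a: "a \<in> Aset" and l: "l \<ge> -1"
    and W: "zpow l * a \<in> Wg D h 1"
  shows "(h, a) \<in> Sset D l"
proof -
  define S where "S = {m::nat. int m \<le> l}"
  have finS: "finite S" unfolding S_def by (rule finite_subset[of _ "{..nat l}"]) auto
  define R where "R = KPcurrent D h (nat (l + 1))
        + (\<Sum>m \<in> S. fls_const (zcoeff a (- int m)) * KPcurrent D h (nat (l - int m)))"
  have RW: "R \<in> Wg D h 1" unfolding R_def
    by (rule Wg_add[OF KP_W[OF D h]], rule Wg_sum, rule Wg_cmult, rule KP_W[OF D h])
  define g where "g = zpow l * a - R"
  have gW: "g \<in> Wg D h 1" unfolding g_def by (rule Wg_diff[OF W RW])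
  have coef: "zcoeff g k = 0" if k: "k \<ge> 0" for k
  proof -
    have t1: "zcoeff (KPcurrent D h (nat (l + 1))) k = (if k = l + 1 then 1 else 0)"
      using KP_char(2)[OF D h, of "nat (l+1)"] k l by simp
    have t2: "zcoeff (fls_const (zcoeff a (- int m)) * KPcurrent D h (nat (l - int m))) k
        = (if m = nat (l - k) \<and> k \<le> l then zcoeff a (- int m) else 0)" if m: "m \<in> S" for m
    proof -
      have "zcoeff (KPcurrent D h (nat (l - int m))) k = (if k = l - int m then 1 else 0)"
        using KP_char(2)[OF D h, of "nat (l - int m)"] k m by (simp add: S_def)
      moreover have "(k = l - int m) = (m = nat (l - k) \<and> k \<le> l)" using k by auto
      ultimately show ?thesis by (simp add: zcoeff_const_mult)
    qed
    have sum: "zcoeff (\<Sum>m \<in> S. fls_const (zcoeff a (- int m)) * KPcurrent D h (nat (l - int m))) k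
        = (if k \<le> l then zcoeff a (k - l) else 0)"
    proof -
      have "zcoeff (\<Sum>m \<in> S. fls_const (zcoeff a (- int m)) * KPcurrent D h (nat (l - int m))) k
         = (\<Sum>m \<in> S. (if m = nat (l - k) \<and> k \<le> l then zcoeff a (- int m) else 0))"
        unfolding zcoeff_sum by (rule sum.cong) (simp_all add: t2)
      also have "\<dots> = (if k \<le> l then zcoeff a (k - l) else 0)"
      proof (cases "k \<le> l")
        case True
        have "(\<Sum>m \<in> S. (if m = nat (l - k) \<and> k \<le> l then zcoeff a (- int m) else 0))
            = (\<Sum>m \<in> S. (if m = nat (l - k) then zcoeff a (- int m) else 0))"
          using True by simp
        also have "\<dots> = zcoeff a (- int (nat (l - k)))"
          using finS True k by (simp add: sum.delta' S_def)
        finally show ?thesis using True by simp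
      qed simp
      finally show ?thesis .
    qed
    have za: "zcoeff (zpow l * a) k = zcoeff a (k - l)" by (rule zcoeff_zpow_mult)
    show ?thesis
    proof (cases "k \<le> l")
      case True then show ?thesis
        unfolding g_def R_def zcoeff_diff zcoeff_add za t1 sum by simp
    next
      case False
      then consider "k = l + 1" | "k > l + 1" by linarith
      then show ?thesis
      proof cases
        case 1 then show ?thesis
          unfolding g_def R_def zcoeff_diff zcoeff_add za t1 sum using Aset_D(1)[OF a] by simp
      next
        case 2 then show ?thesis
          unfolding g_def R_def zcoeff_diff zcoeff_add za t1 sum using Aset_D(2)[OF a, of "k - l"] by simp
      qed
    qed
  qed
  have "g = 0" by (rule W_zero[OF D h gW]) (use coef in auto)
  then have "zpow l * a = R" unfolding g_def by simp
  then show ?thesis unfolding Sset_def R_def S_def using h a by simp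
qed

lemma S_W:
  assumes D: "derivation D" and S: "(h, a) \<in> Sset D l"
  shows "zpow l * a \<in> Wg D h 1"
proof -
  have h: "h \<in> Mset" using S unfolding Sset_def by simp
  have eq: "zpow l * a = KPcurrent D h (nat (l + 1))
        + (\<Sum>m \<in> {m::nat. int m \<le> l}. fls_const (zcoeff a (- int m)) * KPcurrent D h (nat (l - int m)))"
    using S unfolding Sset_def by simp
  show ?thesis unfolding eq
    by (rule Wg_add[OF KP_W[OF D h]], rule Wg_sum, rule Wg_cmult, rule KP_W[OF D h])
qed

section \<open>First-order deformation\<close>

lemma dx_zpow: "derivation D \<Longrightarrow> dx D (zpow L) = 0"
  by (rule fls_eqI) (simp add: dx_nth zpow_def der_0 der_1)

lemma (in rhom) cm_zpow: "fls_cmap E (zpow L) = zpow L"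
  by (rule fls_eqI) (simp add: cm_nth zpow_def E_0 E_1)

lemma deform:
  fixes e :: "'b::comm_ring_1"
  assumes D: "derivation D" and De: "D e = 0" and ee: "e * e = 0"
    and HW: "H \<in> Wg D h 1" and h': "h' = h + fls_const e * dx D H"
    and w: "w \<in> Wg D h 1"
  shows "(1 - fls_const e * H) * w \<in> Wg D h' 1"
proof -
  define \<epsilon> where "\<epsilon> = fls_const e"
  have dxe: "dx D \<epsilon> = 0" by (simp add: \<epsilon>_def dx_const[OF D] De)
  have e2: "\<epsilon> * \<epsilon> = 0" by (simp add: \<epsilon>_def ee)
  define u where "u = 1 - \<epsilon> * H"
  define g0 where "g0 = 1 + \<epsilon> * H"
  have step: "Top D h' (u * f) = u * Top D h f" for f
  proof -
    have "Top D h' (u * f) = u * Top D h f + (\<epsilon> * \<epsilon>) * (- H * dx D H * f)"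
      by (simp add: Top_def h' u_def \<epsilon>_def[symmetric] dx_mult[OF D] dx_diff[OF D] dx_1[OF D] dxe algebra_simps)
    then show ?thesis by (simp add: e2)
  qed
  have base: "u * g0 = 1"
  proof -
    have "u * g0 = 1 - (\<epsilon> * \<epsilon>) * (H * H)" by (simp add: u_def g0_def algebra_simps)
    then show ?thesis by (simp add: e2)
  qed
  have pow: "(Top D h' ^^ k) 1 = u * (Top D h ^^ k) g0" for k
    by (induction k) (simp_all add: base step)
  have uW: "u * w' \<in> Wg D h' 1" if w'W: "w' \<in> Wg D h g0" for w'
  proof -
    obtain c N where c: "w' = (\<Sum>k<N. fls_const (c k) * (Top D h ^^ k) g0)"
      using w'W unfolding Wg_def by blast
    show ?thesis
      by (rule Wg_I[where N=N and c=c]) (simp add: c pow sum_distrib_left algebra_simps)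
  qed
  have eW: "\<epsilon> \<in> Wg D h g0"
  proof -
    have "\<epsilon> = fls_const e * g0" using e2 by (simp add: g0_def \<epsilon>_def[symmetric] algebra_simps)
    then show ?thesis using Wg_cmult[OF Wg_gen[of g0 D h], where a=e] by simp
  qed
  have eHW: "\<epsilon> * H \<in> Wg D h g0"
    using Wg_mono[OF D eW] Wg_Zmult[OF D dxe HW] by simp
  have oneW: "1 \<in> Wg D h g0"
    using Wg_diff[OF Wg_gen eHW] by (simp add: g0_def)
  have "w \<in> Wg D h g0" by (rule Wg_mono[OF D oneW w])
  then show ?thesis using uW unfolding u_def \<epsilon>_def by blast
qed

lemma derivation_dual:
  assumes D: "derivation D"
  shows "derivation (dualD D)"
  unfolding derivation_def dualD_def
  by (simp add: plus_dual_def times_dual_def der_add[OF D] der_mult[OF D] algebra_simps)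

interpretation emb: rhom "\<lambda>c::'a::comm_ring_1. Dual c 0"
  by standard (simp_all add: plus_dual_def times_dual_def one_dual_def)


lemma dualD_E: "derivation D \<Longrightarrow> dualD D (Dual c 0) = Dual (D c) 0"
  by (simp add: dualD_def der_0)

theorem proposition3:
  fixes D :: "'a::comm_ring_1 \<Rightarrow> 'a"
    and l :: int and n :: int and j :: nat
  assumes "derivation D"
    and "\<forall>k::nat. k > 0 \<longrightarrow> (\<exists>y::'a. of_nat k * y = 1)"
    and "l \<ge> -1" and "n \<ge> 1" and "j \<ge> 1"
  shows "tangent D (KPfield D j) (Sprime D l (l + n)) (Sprime (dualD D) l (l + n))"
  unfolding tangent_def
proof
  note D = assms(1)
  define E where "E = (\<lambda>c::'a. Dual c 0)"
  define D' where "D' = dualD D"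
  have D': "derivation D'" unfolding D'_def by (rule derivation_dual[OF D])
  have DE: "D' (E c) = E (D c)" for c unfolding D'_def E_def by (rule dualD_E[OF D])
  define e where "e = (Dual 0 1 :: 'a dual)"
  have De: "D' e = 0" by (simp add: D'_def e_def dualD_def der_0[OF D] der_1[OF D] zero_dual_def)
  have ee: "e * e = 0" by (simp add: e_def times_dual_def zero_dual_def)
  define \<epsilon> where "\<epsilon> = fls_const e"
  have e2: "\<epsilon> * \<epsilon> = 0" by (simp add: \<epsilon>_def ee)
  fix p assume "p \<in> Sprime D l (l + n)"
  then obtain h a where ha: "(h, a) \<in> Sset D l" "(h, a) \<in> Sset D (l + n)" and p: "p = h"
    unfolding Sprime_def mu_def by auto
  have h: "h \<in> Mset" and a: "a \<in> Aset" using ha(1) unfolding Sset_def by auto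
  define H where "H = KPcurrent D h j"
  have HW: "H \<in> Wg D h 1" unfolding H_def by (rule KP_W[OF D h])
  have Hc: "\<forall>k\<ge>0. zcoeff H k = (if k = int j then 1 else 0)" unfolding H_def by (rule KP_char(2)[OF D h])
  have Hdeg: "degle H (int j)" unfolding degle_def using Hc by auto
  define P where "P = fls_cmap E h + fls_const e * dx D' (fls_cmap E H)"
  have Pp: "fls_cmap (\<lambda>c. Dual c 0) p + fls_cmap (Dual 0) (KPfield D j p) = P"
  proof (rule fls_eqI)
    fix m
    show "fls_nth (fls_cmap (\<lambda>c. Dual c 0) p + fls_cmap (Dual 0) (KPfield D j p)) m = fls_nth P m"
      by (simp add: P_def p KPfield_def H_def[symmetric] cmap_nth zero_dual_def emb.cm_nth E_def
          dx_nth[OF derivation_dual[OF D]] dx_nth[OF D] D'_def dualD_def e_def times_dual_def plus_dual_def der_0[OF D])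
  qed
  have Pc: "zcoeff P k = Dual (zcoeff h k) (D (zcoeff H k))" for k
    by (simp add: P_def zcoeff_def cmap_nth E_def zero_dual_def dx_nth[OF derivation_dual[OF D]] D'_def dualD_def e_def
        times_dual_def plus_dual_def der_0[OF D])
  have PM: "P \<in> Mset"
  proof -
    have "zcoeff P 1 = 1" using Pc[of 1] Hc Mset_D(2)[OF h]
      by (cases "j = 1") (simp_all add: one_dual_def der_0[OF D] der_1[OF D])
    moreover have "zcoeff P k = 0" if "k > 1 \<or> k = 0" for k
    proof -
      have "zcoeff h k = 0" using h that unfolding Mset_def by auto
      moreover have "D (zcoeff H k) = 0" using Hc that
        by (cases "k = int j") (auto simp: der_0[OF D] der_1[OF D])
      ultimately show ?thesis using Pc[of k] by (simp add: zero_dual_def)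
    qed
    ultimately show ?thesis unfolding Mset_def by auto
  qed
  define b where "b k = (Top D h ^^ k) a" for k
  have b1: "\<forall>k. degle (b k) (int k + 1)" and b2: "\<forall>k. zcoeff (b k) (int k + 1) = 1"
    using Top_pow_lead[OF D h Aset_D(3)[OF a] Aset_D(1)[OF a]] by (simp_all add: b_def add.commute)
  obtain c where c: "\<forall>m. (1 \<le> m \<and> m < int (j + 1) + 1 \<longrightarrow> zcoeff (a * H - (\<Sum>k<j + 1. fls_const (c k) * b k)) m = 0)
      \<and> (int (j + 1) + 1 \<le> m \<longrightarrow> zcoeff (a * H - (\<Sum>k<j + 1. fls_const (c k) * b k)) m = zcoeff (a * H) m)"
    using tri_solve[OF b1 b2, of "j + 1" "a * H"] by (rule exE)
  define v where "v = (\<Sum>k<j + 1. fls_const (c k) * b k)"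
  have vW: "v \<in> Wg D h a" unfolding v_def b_def by (rule Wg_I) (rule refl)
  have aHdeg: "degle (a * H) (1 + int j)" by (rule degle_mult[OF Aset_D(3)[OF a] Hdeg])
  have u0: "zcoeff (v - a * H) m = 0" if "m \<ge> 1" for m
  proof -
    have "zcoeff (a * H - v) m = 0"
      using c[rule_format, of m] that aHdeg unfolding v_def degle_def by (cases "m < int j + 2") auto
    then show ?thesis by (simp add: zcoeff_diff)
  qed
  define aT where "aT = fls_cmap E a + \<epsilon> * fls_cmap E (v - a * H)"
  have atA: "aT \<in> Aset"
  proof -
    have atc: "zcoeff aT k = Dual (zcoeff a k) (zcoeff (v - a * H) k)" for k
      by (simp add: aT_def zcoeff_def emb.cm_nth E_def \<epsilon>_def e_def times_dual_def plus_dual_def)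
    show ?thesis unfolding Aset_def using atc u0 Aset_D(1,2)[OF a]
      by (auto simp: one_dual_def zero_dual_def)
  qed
  have HhW: "fls_cmap E H \<in> Wg D' (fls_cmap E h) 1"
    using emb.Wg_cm[OF D D' DE[unfolded E_def] HW] by (simp add: E_def emb.cm_1)
  have SL: "(P, aT) \<in> Sset D' L" if L: "L \<ge> -1" and SLa: "(h, a) \<in> Sset D L" for L
  proof -
    have Wa: "zpow L * a \<in> Wg D h 1" by (rule S_W[OF D SLa])
    have Wv: "zpow L * v \<in> Wg D h 1"
      by (rule Wg_mono[OF D Wa Wg_Zmult[OF D dx_zpow[OF D] vW]])
    have X: "fls_cmap E (zpow L * a) \<in> Wg D' (fls_cmap E h) 1"
      using emb.Wg_cm[OF D D' DE[unfolded E_def] Wa] by (simp add: E_def emb.cm_1)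
    have Y: "fls_cmap E (zpow L * v) \<in> Wg D' (fls_cmap E h) 1"
      using emb.Wg_cm[OF D D' DE[unfolded E_def] Wv] by (simp add: E_def emb.cm_1)
    have XY: "fls_cmap E (zpow L * a) + \<epsilon> * fls_cmap E (zpow L * v) \<in> Wg D' (fls_cmap E h) 1"
      unfolding \<epsilon>_def by (rule Wg_add[OF X Wg_cmult[OF Y]])
    have W': "(1 - fls_const e * fls_cmap E H) * (fls_cmap E (zpow L * a) + \<epsilon> * fls_cmap E (zpow L * v))
        \<in> Wg D' P 1"
      by (rule deform[OF D' De ee HhW P_def[unfolded E_def, folded E_def] XY])
    have eq: "(1 - fls_const e * fls_cmap E H) * (fls_cmap E (zpow L * a) + \<epsilon> * fls_cmap E (zpow L * v))
        = zpow L * aT - (\<epsilon> * \<epsilon>) * (fls_cmap E H * zpow L * fls_cmap E v)"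
      unfolding aT_def \<epsilon>_def[symmetric] E_def
      by (simp add: emb.cm_mult emb.cm_diff emb.cm_zpow algebra_simps)
    have "zpow L * aT \<in> Wg D' P 1" using W' unfolding eq e2 by simp
    then show ?thesis by (rule S_crit[OF D' PM atA L])
  qed
  have "(P, aT) \<in> Sset D' l \<inter> Sset D' (l + n)"
    using SL[OF assms(3) ha(1)] SL[of "l + n"] assms(3,4) ha(2) by auto
  then have "P \<in> Sprime D' l (l + n)" unfolding Sprime_def mu_def by force
  then show "fls_cmap (\<lambda>c. Dual c 0) p + fls_cmap (Dual 0) (KPfield D j p) \<in> Sprime (dualD D) l (l + n)"
    unfolding Pp D'_def .
qed

end
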